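(* Let $n=p+q\ge 2$ and let $h^1,\dots,h^n:\mathbb{R}^{p,q}\to\mathcal{C}\ell(p,q)$ be a Clifford field vector. Then for every $x\in\mathbb{R}^{p,q}$ and every $\mu=1,\dots,n$, $h^\mu(x)\in\mathcal{C}\ell_{\circledS}(p,q)$, i.e. $\pi_0(h^\mu(x))=0$, and, if $n$ is odd, also $\pi_n(h^\mu(x))=0$.
   Context: $\eta=\mathrm{diag}(1,\dots,1,-1,\dots,-1)$ ($p$ ones, $q$ minus ones). $\mathcal{C}\ell(p,q)$ is the complex Clifford algebra with identity $e$ and generators $e^1,\dots,e^n$, $e^ae^b+e^be^a=2\eta^{ab}e$, with basis $e$ and $e^{a_1\dots a_k}=e^{a_1}\cdots e^{a_k}$ ($a_1<\dots<a_k$). $\pi_k$ denotes the projection onto the span $\mathcal{C}\ell_k(p,q)$ of the basis elements with $k$ indices. $\mathrm{Tr}(U)$ is the coefficient of $e$ in $U$. The center of $\mathcal{C}\ell(p,q)$ is $\mathcal{C}\ell_0(p,q)$ for even $n$ and $\mathcal{C}\ell_0(p,q)\oplus\mathcal{C}\ell_n(p,q)$ for odd $n$; $\mathcal{C}\ell_{\circledS}(p,q)$ denotes the set of elements with zero projection onto the center. A Clifford field vector is a collection of functions $h^\mu:\mathbb{R}^{p,q}\to\mathcal{C}\ell(p,q)$, $\mu=1,\dots,n$, such that for every $x$: $h^\mu h^\nu+h^\nu h^\mu=2\eta^{\mu\nu}e$ for all $\mu,\nu$, and $\mathrm{Tr}(h^1\cdots h^n)=0$. *)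

theory Defs
  imports Complex_Main
begin

text \<open>An element is represented by its coefficient function on index sets:
  U A is the coefficient of the basis element e^{A} (A a subset of {1..n},
  the basis element being the product of the e^a, a in A, in increasing order;
  e^{} = e is the identity).\<close>

type_synonym cl = "nat set \<Rightarrow> complex"

definition eta :: "nat \<Rightarrow> nat \<Rightarrow> nat \<Rightarrow> complex" where
  "eta p a b = (if a = b then (if a \<le> p then 1 else -1) else 0)"

definition cl_elem :: "nat \<Rightarrow> cl \<Rightarrow> bool" where
  "cl_elem n U \<longleftrightarrow> (\<forall>A. \<not> A \<subseteq> {1..n} \<longrightarrow> U A = 0)"

definition cl_zero :: cl where "cl_zero = (\<lambda>A. 0)"

definition cl_one :: cl where "cl_one = (\<lambda>A. if A = {} then 1 else 0)"

definition cl_add :: "cl \<Rightarrow> cl \<Rightarrow> cl" where "cl_add U V = (\<lambda>A. U A + V A)"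

definition cl_scale :: "complex \<Rightarrow> cl \<Rightarrow> cl" where "cl_scale c U = (\<lambda>A. c * U A)"

text \<open>e^{A} e^{B} = blade_sign p A B * e^{A symdiff B}: reorder (one sign per pair a in A,
  b in B with a > b) and square the repeated generators (factor eta a a).\<close>
definition blade_sign :: "nat \<Rightarrow> nat set \<Rightarrow> nat set \<Rightarrow> complex" where
  "blade_sign p A B =
     (-1) ^ card {(a, b). a \<in> A \<and> b \<in> B \<and> b < a} * (\<Prod>a\<in>A \<inter> B. eta p a a)"

definition cl_mult :: "nat \<Rightarrow> nat \<Rightarrow> cl \<Rightarrow> cl \<Rightarrow> cl" where
  "cl_mult p q U V = (\<lambda>C. \<Sum>A\<in>Pow {1..p+q}. \<Sum>B\<in>Pow {1..p+q}.
      if (A - B) \<union> (B - A) = C then blade_sign p A B * U A * V B else 0)"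

definition cl_listprod :: "nat \<Rightarrow> nat \<Rightarrow> cl list \<Rightarrow> cl" where
  "cl_listprod p q Us = foldr (cl_mult p q) Us cl_one"

definition cl_tr :: "cl \<Rightarrow> complex" where "cl_tr U = U {}"

definition cl_proj :: "nat \<Rightarrow> nat \<Rightarrow> cl \<Rightarrow> cl" where
  "cl_proj n k U = (\<lambda>A. if A \<subseteq> {1..n} \<and> card A = k then U A else 0)"

definition pts :: "nat \<Rightarrow> (nat \<Rightarrow> real) set" where
  "pts n = {x. \<forall>i. i \<notin> {1..n} \<longrightarrow> x i = 0}"

definition clifford_field_vector :: "nat \<Rightarrow> nat \<Rightarrow> (nat \<Rightarrow> (nat \<Rightarrow> real) \<Rightarrow> cl) \<Rightarrow> bool" where
  "clifford_field_vector p q h \<longleftrightarrow>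
     (\<forall>x\<in>pts (p+q).
        (\<forall>\<mu>\<in>{1..p+q}. cl_elem (p+q) (h \<mu> x)) \<and>
        (\<forall>\<mu>\<in>{1..p+q}. \<forall>\<nu>\<in>{1..p+q}.
           cl_add (cl_mult p q (h \<mu> x) (h \<nu> x)) (cl_mult p q (h \<nu> x) (h \<mu> x))
             = cl_scale (2 * eta p \<mu> \<nu>) cl_one) \<and>
        cl_tr (cl_listprod p q (map (\<lambda>\<mu>. h \<mu> x) [1..<p+q+1])) = 0)"

end

theory Submission
  imports Defs
begin

definition sd :: "nat set \<Rightarrow> nat set \<Rightarrow> nat set" where "sd A B = (A - B) \<union> (B - A)"
definition sgnf :: "nat \<Rightarrow> nat \<Rightarrow> complex" where "sgnf a b = (if b < a then -1 else 1)"

lemma prod_if_card: "finite S \<Longrightarrow> (\<Prod>x\<in>S. if P x then (c::complex) else 1) = c ^ card {x\<in>S. P x}"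
  by (simp add: prod.inter_filter[symmetric])

lemma bs_eq: assumes "finite A" "finite B"
  shows "blade_sign p A B = (\<Prod>a\<in>A. \<Prod>b\<in>B. sgnf a b) * (\<Prod>a\<in>A\<inter>B. eta p a a)"
proof -
  have "(\<Prod>a\<in>A. \<Prod>b\<in>B. sgnf a b) = (\<Prod>x\<in>A\<times>B. if snd x < fst x then -1 else 1)"
    by (simp add: prod.cartesian_product sgnf_def case_prod_beta)
  also have "\<dots> = (-1) ^ card {x\<in>A\<times>B. snd x < fst x}"
    using assms by (simp add: prod_if_card)
  also have "{x\<in>A\<times>B. snd x < fst x} = {(a, b). a \<in> A \<and> b \<in> B \<and> b < a}" by auto
  finally show ?thesis by (simp add: blade_sign_def)
qed

lemma prod_sd: assumes "finite A" "finite B" "\<And>x. g x * g x = (1::complex)"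
  shows "prod g (sd A B) = prod g A * prod g B"
proof -
  have a: "prod g A = prod g (A \<inter> B) * prod g (A - B)"
    using assms(1) by (rule prod.Int_Diff)
  have b: "prod g B = prod g (A \<inter> B) * prod g (B - A)"
    using assms(2) prod.Int_Diff[of B g A] by (simp add: Int_commute)
  have c: "prod g (sd A B) = prod g (A - B) * prod g (B - A)"
    unfolding sd_def using assms by (intro prod.union_disjoint) auto
  have d: "prod g (A \<inter> B) * prod g (A \<inter> B) = 1"
    using assms(3) by (simp add: prod.distrib[symmetric])
  have "prod g A * prod g B = (prod g (A \<inter> B) * prod g (A \<inter> B)) * (prod g (A - B) * prod g (B - A))"
    unfolding a b by (simp only: mult_ac)
  then show ?thesis using c d by simp
qed

lemma sgnf_sq: "sgnf a b * sgnf a b = 1" by (simp add: sgnf_def)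
lemma eta_sq: "eta p a a * eta p a a = 1" by (simp add: eta_def)

lemma cocycle: assumes "finite A" "finite B" "finite C"
  shows "blade_sign p A B * blade_sign p (sd A B) C = blade_sign p A (sd B C) * blade_sign p B C"
proof -
  have fsd: "finite (sd X Y)" if "finite X" "finite Y" for X Y using that by (simp add: sd_def)
  have P1: "(\<Prod>a\<in>sd A B. \<Prod>b\<in>C. sgnf a b) = (\<Prod>a\<in>A. \<Prod>b\<in>C. sgnf a b) * (\<Prod>a\<in>B. \<Prod>b\<in>C. sgnf a b)"
    by (rule prod_sd) (use assms in \<open>auto simp: prod.distrib[symmetric] sgnf_sq\<close>)
  have P2: "(\<Prod>a\<in>A. \<Prod>b\<in>sd B C. sgnf a b) = (\<Prod>a\<in>A. \<Prod>b\<in>B. sgnf a b) * (\<Prod>a\<in>A. \<Prod>b\<in>C. sgnf a b)"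
    by (subst prod_sd) (use assms in \<open>auto simp: prod.distrib sgnf_sq\<close>)
  have e1: "sd A B \<inter> C = sd (A \<inter> C) (B \<inter> C)" "A \<inter> sd B C = sd (A \<inter> B) (A \<inter> C)"
    by (auto simp: sd_def)
  have Q1: "(\<Prod>a\<in>sd A B \<inter> C. eta p a a) = (\<Prod>a\<in>A \<inter> C. eta p a a) * (\<Prod>a\<in>B \<inter> C. eta p a a)"
    unfolding e1 by (rule prod_sd) (use assms eta_sq in auto)
  have Q2: "(\<Prod>a\<in>A \<inter> sd B C. eta p a a) = (\<Prod>a\<in>A \<inter> B. eta p a a) * (\<Prod>a\<in>A \<inter> C. eta p a a)"
    unfolding e1 by (rule prod_sd) (use assms eta_sq in auto)
  show ?thesis using assms fsd
    by (simp add: bs_eq P1 P2 Q1 Q2 algebra_simps)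
qed


lemma push:
  assumes "finite P" "\<And>A B. A \<in> P \<Longrightarrow> B \<in> P \<Longrightarrow> sd A B \<in> P"
  shows "(\<Sum>C\<in>P. f C * (\<Sum>A\<in>P. \<Sum>B\<in>P. if sd A B = C then g A B else (0::complex)))
       = (\<Sum>A\<in>P. \<Sum>B\<in>P. f (sd A B) * g A B)"
proof -
  have "(\<Sum>A\<in>P. \<Sum>B\<in>P. f (sd A B) * g A B)
      = (\<Sum>A\<in>P. \<Sum>B\<in>P. \<Sum>C\<in>P. if sd A B = C then f C * g A B else 0)"
    using assms by (intro sum.cong refl) simp
  also have "\<dots> = (\<Sum>A\<in>P. \<Sum>C\<in>P. \<Sum>B\<in>P. if sd A B = C then f C * g A B else 0)"
    by (intro sum.cong refl sum.swap)
  also have "\<dots> = (\<Sum>C\<in>P. \<Sum>A\<in>P. \<Sum>B\<in>P. if sd A B = C then f C * g A B else 0)"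
    by (rule sum.swap)
  also have "\<dots> = (\<Sum>C\<in>P. f C * (\<Sum>A\<in>P. \<Sum>B\<in>P. if sd A B = C then g A B else 0))"
    by (simp add: sum_distrib_left if_distrib cong: if_cong)
  finally show ?thesis ..
qed

lemma mult_sd: "cl_mult p q U V = (\<lambda>C. \<Sum>A\<in>Pow {1..p+q}. \<Sum>B\<in>Pow {1..p+q}.
      if sd A B = C then blade_sign p A B * U A * V B else 0)"
  by (simp add: cl_mult_def sd_def)

lemma sd_Pow: "A \<in> Pow S \<Longrightarrow> B \<in> Pow S \<Longrightarrow> sd A B \<in> Pow S"
  by (auto simp: sd_def)

lemma sd_assoc: "sd (sd A B) E = sd A (sd B E)" by (auto simp: sd_def)

lemma mult_assoc: "cl_mult p q (cl_mult p q U V) W = cl_mult p q U (cl_mult p q V W)"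
proof
  fix D
  let ?P = "Pow {1..p+q}"
  let ?b = "blade_sign p"
  have fP: "finite ?P" by simp
  have L: "cl_mult p q (cl_mult p q U V) W D
    = (\<Sum>E\<in>?P. \<Sum>A\<in>?P. \<Sum>B\<in>?P. (if sd (sd A B) E = D then ?b (sd A B) E * W E else 0) * (?b A B * U A * V B))"
  proof -
    have "cl_mult p q (cl_mult p q U V) W D = (\<Sum>C\<in>?P. \<Sum>E\<in>?P.
        (if sd C E = D then ?b C E * W E else 0) * cl_mult p q U V C)"
      unfolding mult_sd[of p q "cl_mult p q U V" W] by (intro sum.cong refl) auto
    also have "\<dots> = (\<Sum>E\<in>?P. \<Sum>C\<in>?P. (if sd C E = D then ?b C E * W E else 0) * cl_mult p q U V C)"
      by (rule sum.swap)
    also have "\<dots> = (\<Sum>E\<in>?P. \<Sum>A\<in>?P. \<Sum>B\<in>?P. (if sd (sd A B) E = D then ?b (sd A B) E * W E else 0) * (?b A B * U A * V B))"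
      unfolding mult_sd[of p q U V] by (rule sum.cong[OF refl], rule push[OF fP sd_Pow])
    finally show ?thesis .
  qed
  have R: "cl_mult p q U (cl_mult p q V W) D
    = (\<Sum>A\<in>?P. \<Sum>B\<in>?P. \<Sum>E\<in>?P. (if sd A (sd B E) = D then ?b A (sd B E) * U A else 0) * (?b B E * V B * W E))"
  proof -
    have "cl_mult p q U (cl_mult p q V W) D = (\<Sum>A\<in>?P. \<Sum>F\<in>?P.
        (if sd A F = D then ?b A F * U A else 0) * cl_mult p q V W F)"
      unfolding mult_sd[of p q U "cl_mult p q V W"] by (intro sum.cong refl) auto
    also have "\<dots> = (\<Sum>A\<in>?P. \<Sum>B\<in>?P. \<Sum>E\<in>?P. (if sd A (sd B E) = D then ?b A (sd B E) * U A else 0) * (?b B E * V B * W E))"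
      by (rule sum.cong[OF refl], subst mult_sd[of p q V W], rule push[OF fP sd_Pow])
    finally show ?thesis .
  qed
  have L2: "(\<Sum>E\<in>?P. \<Sum>A\<in>?P. \<Sum>B\<in>?P. (if sd (sd A B) E = D then ?b (sd A B) E * W E else 0) * (?b A B * U A * V B))
     = (\<Sum>A\<in>?P. \<Sum>B\<in>?P. \<Sum>E\<in>?P. (if sd (sd A B) E = D then ?b (sd A B) E * W E else 0) * (?b A B * U A * V B))"
    by (subst sum.swap, intro sum.cong refl sum.swap)
  have T: "(if sd (sd A B) E = D then ?b (sd A B) E * W E else 0) * (?b A B * U A * V B)
     = (if sd A (sd B E) = D then ?b A (sd B E) * U A else 0) * (?b B E * V B * W E)"
    if "A \<in> ?P" "B \<in> ?P" "E \<in> ?P" for A B E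
  proof -
    have f: "finite A" "finite B" "finite E" using that by (auto intro: finite_subset)
    have "?b A B * ?b (sd A B) E = ?b A (sd B E) * ?b B E" by (rule cocycle[OF f])
    then show ?thesis by (simp add: sd_assoc) (metis (no_types, lifting) mult.assoc mult.commute)
  qed
  show "cl_mult p q (cl_mult p q U V) W D = cl_mult p q U (cl_mult p q V W) D"
    unfolding L R L2 by (intro sum.cong refl T) auto
qed


lemma sd_empty: "sd A B = {} \<longleftrightarrow> A = B" by (auto simp: sd_def)
lemma sd_empty_left: "sd {} B = B" by (auto simp: sd_def)

lemma bs_empty: "blade_sign p {} B = 1" by (simp add: blade_sign_def)

lemma mult_one_left: assumes "cl_elem (p+q) a" shows "cl_mult p q cl_one a = a"
proof
  fix C
  have i: "(\<Sum>B\<in>Pow {1..p+q}. if sd A B = C then blade_sign p A B * cl_one A * a B else 0)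
     = (if A = {} then (\<Sum>B\<in>Pow {1..p+q}. if B = C then a B else 0) else 0)" for A
    unfolding cl_one_def by (cases "A = {}") (simp_all add: sd_empty_left bs_empty cong: if_cong)
  have "cl_mult p q cl_one a C = (\<Sum>B\<in>Pow {1..p+q}. if B = C then a B else 0)"
    unfolding mult_sd i by simp
  also have "\<dots> = a C" using assms by (auto simp: cl_elem_def)
  finally show "cl_mult p q cl_one a C = a C" .
qed


lemma mult_scale_left: "cl_mult p q (cl_scale c X) Y = cl_scale c (cl_mult p q X Y)"
  by (rule ext) (simp add: mult_sd cl_scale_def sum_distrib_left mult_ac if_distrib cong: if_cong)

lemma mult_scale_right: "cl_mult p q X (cl_scale c Y) = cl_scale c (cl_mult p q X Y)"
  by (rule ext) (simp add: mult_sd cl_scale_def sum_distrib_left mult_ac if_distrib cong: if_cong)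

lemma tr_formula: "cl_mult p q X Y {} = (\<Sum>A\<in>Pow {1..p+q}. blade_sign p A A * X A * Y A)"
  unfolding mult_sd by (simp add: sd_empty cong: if_cong)

lemma tr_comm: "cl_mult p q X Y {} = cl_mult p q Y X {}"
  unfolding tr_formula by (simp add: mult_ac)

lemma mult_elem: "cl_elem (p+q) (cl_mult p q X Y)"
  unfolding cl_elem_def mult_sd
proof (intro allI impI)
  fix C assume "\<not> C \<subseteq> {1..p+q}"
  then have "sd A B \<noteq> C" if "A \<in> Pow {1..p+q}" "B \<in> Pow {1..p+q}" for A B
    using sd_Pow[OF that] by auto
  then show "(\<Sum>A\<in>Pow {1..p+q}. \<Sum>B\<in>Pow {1..p+q}. if sd A B = C then blade_sign p A B * X A * Y B else 0) = 0"
    by simp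
qed

lemma keyL:
  assumes ea: "cl_elem (p+q) a"
    and ab: "cl_mult p q a b = cl_scale (-1) (cl_mult p q b a)"
    and bb: "cl_mult p q b b = cl_scale e cl_one" and e: "e \<noteq> 0"
  shows "a {} = 0"
proof -
  let ?M = "cl_mult p q"
  have 1: "?M (?M b a) b = cl_scale (-e) a"
  proof -
    have "?M (?M b a) b = ?M b (?M a b)" by (rule mult_assoc)
    also have "\<dots> = cl_scale (-1) (?M (?M b b) a)" by (simp add: ab mult_scale_right mult_assoc)
    also have "\<dots> = cl_scale (-e) a" by (simp add: bb mult_scale_left mult_one_left[OF ea]) (simp add: cl_scale_def)
    finally show ?thesis .
  qed
  have 2: "?M b (?M b a) = cl_scale e a"
    by (simp add: mult_assoc[symmetric] bb mult_scale_left mult_one_left[OF ea])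
  have "?M (?M b a) b {} = ?M b (?M b a) {}" by (rule tr_comm)
  then have "-e * a {} = e * a {}" unfolding 1 2 by (simp add: cl_scale_def)
  then show ?thesis using e by simp
qed


definition omg :: "nat \<Rightarrow> cl" where "omg n = (\<lambda>A. if A = {1..n} then 1 else 0)"

lemma omega_tr: "cl_mult p q X (omg (p+q)) {} = blade_sign p {1..p+q} {1..p+q} * X {1..p+q}"
proof -
  have "cl_mult p q X (omg (p+q)) {} = (\<Sum>A\<in>Pow {1..p+q}. if A = {1..p+q} then blade_sign p A A * X A else 0)"
    unfolding tr_formula omg_def by (rule sum.cong) auto
  then show ?thesis by simp
qed

lemma bs_nz: "blade_sign p A A \<noteq> 0" if "finite A"
  using that by (simp add: blade_sign_def eta_def)

lemma bs_sym: assumes "A \<subseteq> N" "finite N" "odd (card N)"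
  shows "blade_sign p A N = blade_sign p N A"
proof -
  have fA: "finite A" using assms finite_subset by blast
  have row: "(\<Prod>b\<in>N. sgnf a b) = (\<Prod>b\<in>N. sgnf b a)" if "a \<in> N" for a
  proof -
    have "(\<Prod>b\<in>N. sgnf a b) * (\<Prod>b\<in>N. sgnf b a) = (\<Prod>b\<in>N. if b = a then 1 else -1)"
      by (simp add: prod.distrib[symmetric] sgnf_def) (rule prod.cong, auto)
    also have "\<dots> = (\<Prod>b\<in>N. if b \<noteq> a then -1 else 1)" by (rule prod.cong) auto
    also have "\<dots> = (-1) ^ card {b\<in>N. b \<noteq> a}" using assms(2) by (rule prod_if_card)
    also have "{b\<in>N. b \<noteq> a} = N - {a}" by auto
    also have "(-1::complex) ^ card (N - {a}) = 1"
      using assms(2,3) that by (simp add: card_Diff_singleton)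
    finally have xy: "(\<Prod>b\<in>N. sgnf a b) * (\<Prod>b\<in>N. sgnf b a) = 1" .
    have yy: "(\<Prod>b\<in>N. sgnf b a) * (\<Prod>b\<in>N. sgnf b a) = 1"
      by (simp add: prod.distrib[symmetric] sgnf_sq)
    have "(\<Prod>b\<in>N. sgnf a b) = (\<Prod>b\<in>N. sgnf a b) * ((\<Prod>b\<in>N. sgnf b a) * (\<Prod>b\<in>N. sgnf b a))"
      using yy by simp
    also have "\<dots> = (\<Prod>b\<in>N. sgnf b a)" using xy by (simp only: mult.assoc[symmetric]) simp
    finally show ?thesis .
  qed
  have "(\<Prod>a\<in>A. \<Prod>b\<in>N. sgnf a b) = (\<Prod>a\<in>A. \<Prod>b\<in>N. sgnf b a)"
    by (rule prod.cong[OF refl], rule row) (use assms(1) in auto)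
  also have "\<dots> = (\<Prod>a\<in>N. \<Prod>b\<in>A. sgnf a b)" by (rule prod.swap)
  finally show ?thesis using fA assms(2) by (simp add: bs_eq Int_commute)
qed

lemma omega_central: assumes "odd (p+q)"
  shows "cl_mult p q b (omg (p+q)) = cl_mult p q (omg (p+q)) b"
proof
  fix C
  let ?P = "Pow {1..p+q}" and ?N = "{1..p+q}"
  have "cl_mult p q b (omg (p+q)) C = (\<Sum>A\<in>?P. \<Sum>B\<in>?P. if B = ?N then (if sd A ?N = C then blade_sign p A ?N * b A else 0) else 0)"
    unfolding mult_sd omg_def by (intro sum.cong refl) auto
  also have "\<dots> = (\<Sum>A\<in>?P. if sd A ?N = C then blade_sign p A ?N * b A else 0)" by simp
  also have "\<dots> = (\<Sum>A\<in>?P. if sd ?N A = C then blade_sign p ?N A * b A else 0)"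
  proof (rule sum.cong[OF refl])
    fix A assume "A \<in> ?P"
    moreover have "odd (card ?N)" using assms by simp
    ultimately have "blade_sign p A ?N = blade_sign p ?N A" by (intro bs_sym) auto
    moreover have "sd A ?N = sd ?N A" by (auto simp: sd_def)
    ultimately show "(if sd A ?N = C then blade_sign p A ?N * b A else 0) = (if sd ?N A = C then blade_sign p ?N A * b A else 0)"
      by simp
  qed
  also have "\<dots> = (\<Sum>A\<in>?P. \<Sum>B\<in>?P. if A = ?N then (if sd ?N B = C then blade_sign p ?N B * b B else 0) else 0)"
    by (subst sum.swap) simp
  also have "\<dots> = cl_mult p q (omg (p+q)) b C"
    unfolding mult_sd omg_def by (intro sum.cong refl) auto
  finally show "cl_mult p q b (omg (p+q)) C = cl_mult p q (omg (p+q)) b C" .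
qed


theorem theorem5:
  fixes p q :: nat and h :: "nat \<Rightarrow> (nat \<Rightarrow> real) \<Rightarrow> cl"
  assumes "p + q \<ge> 2"
    and "clifford_field_vector p q h"
    and "x \<in> pts (p+q)"
    and "\<mu> \<in> {1..p+q}"
  shows "cl_proj (p+q) 0 (h \<mu> x) = cl_zero \<and>
         (odd (p+q) \<longrightarrow> cl_proj (p+q) (p+q) (h \<mu> x) = cl_zero)"
proof -
  let ?M = "cl_mult p q" and ?N = "{1..p+q}"
  define \<nu> where "\<nu> = (if \<mu> = 1 then 2 else (1::nat))"
  have nu: "\<nu> \<in> ?N" "\<nu> \<noteq> \<mu>" using assms(1,4) by (auto simp: \<nu>_def)
  define a where "a = h \<mu> x"
  define b where "b = h \<nu> x"
  define e where "e = eta p \<nu> \<nu>"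
  have cfv: "\<forall>\<mu>\<in>?N. cl_elem (p+q) (h \<mu> x)"
     "\<forall>\<mu>\<in>?N. \<forall>\<nu>\<in>?N. cl_add (?M (h \<mu> x) (h \<nu> x)) (?M (h \<nu> x) (h \<mu> x)) = cl_scale (2 * eta p \<mu> \<nu>) cl_one"
    using assms(2,3) unfolding clifford_field_vector_def by blast+
  have ea: "cl_elem (p+q) a" using cfv(1) assms(4) by (simp add: a_def)
  have e: "e \<noteq> 0" by (simp add: e_def eta_def)
  have ab: "?M a b = cl_scale (-1) (?M b a)"
  proof
    fix C
    have "cl_add (?M a b) (?M b a) C = cl_scale (2 * eta p \<mu> \<nu>) cl_one C"
      using cfv(2) assms(4) nu(1) by (simp add: a_def b_def)
    then have "?M a b C + ?M b a C = 0" using nu(2) by (simp add: cl_add_def cl_scale_def eta_def)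
    then show "?M a b C = cl_scale (-1) (?M b a) C" by (simp add: cl_scale_def eq_neg_iff_add_eq_0)
  qed
  have bb: "?M b b = cl_scale e cl_one"
  proof
    fix C
    have "cl_add (?M b b) (?M b b) C = cl_scale (2 * e) cl_one C"
      using cfv(2) nu(1) by (simp add: b_def e_def)
    then show "?M b b C = cl_scale e cl_one C" by (simp add: cl_add_def cl_scale_def)
  qed
  have a0: "a {} = 0" by (rule keyL[OF ea ab bb e])
  have P1: "cl_proj (p+q) 0 a = cl_zero"
  proof
    fix A
    show "cl_proj (p+q) 0 a A = cl_zero A"
    proof (cases "A \<subseteq> ?N \<and> card A = 0")
      case True
      then have "A = {}" using finite_subset by fastforce
      then show ?thesis using a0 by (simp add: cl_proj_def cl_zero_def)
    qed (auto simp: cl_proj_def cl_zero_def)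
  qed
  have P2: "cl_proj (p+q) (p+q) a = cl_zero" if odd: "odd (p+q)"
  proof -
    let ?w = "omg (p+q)"
    have "?M (?M a ?w) b = ?M a (?M ?w b)" by (rule mult_assoc)
    also have "\<dots> = ?M a (?M b ?w)" using omega_central[OF odd, of b] by simp
    also have "\<dots> = cl_scale (-1) (?M (?M b a) ?w)" by (simp add: mult_assoc[symmetric] ab mult_scale_left)
    also have "\<dots> = cl_scale (-1) (?M b (?M a ?w))" by (simp add: mult_assoc)
    finally have ab': "?M (?M a ?w) b = cl_scale (-1) (?M b (?M a ?w))" .
    have "?M a ?w {} = 0" by (rule keyL[OF mult_elem ab' bb e])
    then have aN: "a ?N = 0" using bs_nz[of ?N p] by (simp add: omega_tr)
    show ?thesis
    proof
      fix A
      show "cl_proj (p+q) (p+q) a A = cl_zero A"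
      proof (cases "A \<subseteq> ?N \<and> card A = p+q")
        case True
        then have "A = ?N" using card_subset_eq[of ?N A] by simp
        then show ?thesis using aN by (simp add: cl_proj_def cl_zero_def)
      qed (auto simp: cl_proj_def cl_zero_def)
    qed
  qed
  show ?thesis using P1 P2 by (simp add: a_def)
qed

end
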